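(* Let $(J,S)$ be an irreducible and ergodic homogeneous $d$-dimensional multi-time Markov renewal chain, and let $\nu$ be the stationary distribution of the embedded chain $J$. Then for all $j\in E$ and $1\le u\le d$, $$\mu^{(u,u)}_{jj}=\frac{\sum_{i=1}^s\nu_i m^{[u,u]}_i}{\nu_j}+2\,\frac{\sum_{i=1}^s\sum_{r\ne j}\nu_i p_{ir}m^{[u]}_{ir}\mu^{(u)}_{rj}}{\nu_j}.$$
   Context: $E=\{1,\dots,s\}$; $\mathbb{N}^d$ has the componentwise partial order, $k<l$ meaning $k\le l$, $k\ne l$. A homogeneous $d$-dimensional multi-time Markov renewal chain is a process $(J_n,S_n)_{n\in\mathbb{N}}$, $J_n\in E$, $S_n=(S^{[1]}_n,\dots,S^{[d]}_n)\in\mathbb{N}^d$, $S_0=0_d$, $S_n<S_{n+1}$, with a.s. $\mathbb{P}(J_{n+1}=j,S_{n+1}-S_n=k\mid J_{0:n},S_{0:n})=q_{J_nj}(k)$, $q_{ij}(k)=\mathbb{P}(J_{n+1}=j,S_{n+1}-S_n=k\mid J_n=i)$ independent of $n$. $X_{n+1}=S_{n+1}-S_n$, coordinates $X^{[u]}_{n+1}$. $p_{ij}=\sum_kq_{ij}(k)$. $\mathbb{E}_i$: expectation given $J_0=i$. $m^{[u,u]}_i=\mathbb{E}[(X^{[u]}_{n+1})^2\mid J_n=i]$, $m^{[u]}_{ir}=\mathbb{E}[X^{[u]}_{n+1}\mid J_n=i,J_{n+1}=r]$. With $m_j=\min\{l\ge1:J_l=j\}$ and $T^{[u]}_j=S^{[u]}_{m_j}$: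 $\mu^{(u)}_{ij}=\mathbb{E}_i[T^{[u]}_j]$, $\mu^{(u,u)}_{ij}=\mathbb{E}_i[(T^{[u]}_j)^2]$. Irreducible: $J$ irreducible. Ergodic: for each $u$, the marginal one-dimensional-time Markov renewal chain $(J,S^{[u]})$ (kernel $q^{[u]}_{ij}(k)=\sum_{k_{1:d}:k_u=k}q_{ij}(k_{1:d})$) is positive recurrent (all return times $T^{[u]}_j$ a.s. finite with finite mean) and aperiodic (each return time distribution has period $1$). *)

theory Defs
  imports "HOL-Probability.Probability"
begin

text \<open>State space E = {1..s}; multi-times are vectors in nat^'d (d = CARD('d)).
  The semi-Markov kernel is q i j k = P(J_{n+1}=j, S_{n+1}-S_n = k | J_n = i).\<close>

definition stE :: "nat \<Rightarrow> nat set" where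
  "stE s = {1..s}"

definition vless :: "nat^'d \<Rightarrow> nat^'d \<Rightarrow> bool" where
  "vless k l \<longleftrightarrow> (\<forall>u. k $ u \<le> l $ u) \<and> k \<noteq> l"

definition incr :: "(nat \<Rightarrow> 'w \<Rightarrow> nat^'d) \<Rightarrow> nat \<Rightarrow> 'w \<Rightarrow> nat^'d" where
  "incr S n \<omega> = (\<chi> u. S (Suc n) \<omega> $ u - S n \<omega> $ u)"

definition sm_kernel :: "nat \<Rightarrow> (nat \<Rightarrow> nat \<Rightarrow> nat^'d \<Rightarrow> real) \<Rightarrow> bool" where
  "sm_kernel s q \<longleftrightarrow>
     (\<forall>i j k. q i j k \<ge> 0) \<and> (\<forall>i j. q i j 0 = 0) \<and>
     (\<forall>i\<in>stE s. ((\<lambda>(j,k). q i j k) has_sum 1) (stE s \<times> UNIV))"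

text \<open>M i is the law of the chain started in J_0 = i (so expectations w.r.t. M i are E_i).
  The conditional-probability (Markov renewal) property is stated in its discrete form:
  for every history, P(history, J_{n+1}=j, X_{n+1}=k) = q (J_n) j k * P(history).\<close>
definition MTMRC ::
  "nat \<Rightarrow> (nat \<Rightarrow> nat \<Rightarrow> nat^'d \<Rightarrow> real) \<Rightarrow> (nat \<Rightarrow> 'w measure)
    \<Rightarrow> (nat \<Rightarrow> 'w \<Rightarrow> nat) \<Rightarrow> (nat \<Rightarrow> 'w \<Rightarrow> nat^'d) \<Rightarrow> bool" where
  "MTMRC s q M J S \<longleftrightarrow> sm_kernel s q \<and>
     (\<forall>i\<in>stE s. prob_space (M i) \<and>
        (\<forall>n. J n \<in> measurable (M i) (count_space UNIV)) \<and>
        (\<forall>n. S n \<in> measurable (M i) (count_space UNIV)) \<and>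
        (\<forall>\<omega>\<in>space (M i). J 0 \<omega> = i \<and> S 0 \<omega> = 0 \<and>
            (\<forall>n. J n \<omega> \<in> stE s \<and> vless (S n \<omega>) (S (Suc n) \<omega>))) \<and>
        (\<forall>n (js :: nat \<Rightarrow> nat) (ks :: nat \<Rightarrow> nat^'d) j k.
           measure (M i) {\<omega>\<in>space (M i). (\<forall>m\<le>n. J m \<omega> = js m \<and> S m \<omega> = ks m) \<and>
                                        J (Suc n) \<omega> = j \<and> incr S n \<omega> = k}
           = q (js n) j k * measure (M i) {\<omega>\<in>space (M i). \<forall>m\<le>n. J m \<omega> = js m \<and> S m \<omega> = ks m}))"

definition pker :: "(nat \<Rightarrow> nat \<Rightarrow> nat^'d \<Rightarrow> real) \<Rightarrow> nat \<Rightarrow> nat \<Rightarrow> real" where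
  "pker q i j = (\<Sum>\<^sub>\<infinity>k. q i j k)"

fun pkpow :: "nat \<Rightarrow> (nat \<Rightarrow> nat \<Rightarrow> nat^'d \<Rightarrow> real) \<Rightarrow> nat \<Rightarrow> nat \<Rightarrow> nat \<Rightarrow> real" where
  "pkpow s q 0 i j = (if i = j then 1 else 0)"
| "pkpow s q (Suc n) i j = (\<Sum>r\<in>stE s. pkpow s q n i r * pker q r j)"

definition irreducible_J :: "nat \<Rightarrow> (nat \<Rightarrow> nat \<Rightarrow> nat^'d \<Rightarrow> real) \<Rightarrow> bool" where
  "irreducible_J s q \<longleftrightarrow> (\<forall>i\<in>stE s. \<forall>j\<in>stE s. \<exists>n. pkpow s q n i j > 0)"

definition stationary :: "nat \<Rightarrow> (nat \<Rightarrow> nat \<Rightarrow> nat^'d \<Rightarrow> real) \<Rightarrow> (nat \<Rightarrow> real) \<Rightarrow> bool" where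
  "stationary s q \<nu> \<longleftrightarrow> (\<forall>i\<in>stE s. \<nu> i \<ge> 0) \<and> (\<Sum>i\<in>stE s. \<nu> i) = 1 \<and>
     (\<forall>j\<in>stE s. \<nu> j = (\<Sum>i\<in>stE s. \<nu> i * pker q i j))"

definition Tret :: "(nat \<Rightarrow> 'w \<Rightarrow> nat) \<Rightarrow> (nat \<Rightarrow> 'w \<Rightarrow> nat^'d) \<Rightarrow> 'd \<Rightarrow> nat \<Rightarrow> 'w \<Rightarrow> ennreal" where
  "Tret J S u j \<omega> = (if \<exists>l\<ge>1. J l \<omega> = j
      then of_nat (S (LEAST l. l \<ge> 1 \<and> J l \<omega> = j) \<omega> $ u) else \<infinity>)"

definition mu1 :: "(nat \<Rightarrow> 'w measure) \<Rightarrow> (nat \<Rightarrow> 'w \<Rightarrow> nat) \<Rightarrow> (nat \<Rightarrow> 'w \<Rightarrow> nat^'d) \<Rightarrow> 'd \<Rightarrow> nat \<Rightarrow> nat \<Rightarrow> ennreal" where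
  "mu1 M J S u i j = (\<integral>\<^sup>+\<omega>. Tret J S u j \<omega> \<partial>M i)"

definition mu2 :: "(nat \<Rightarrow> 'w measure) \<Rightarrow> (nat \<Rightarrow> 'w \<Rightarrow> nat) \<Rightarrow> (nat \<Rightarrow> 'w \<Rightarrow> nat^'d) \<Rightarrow> 'd \<Rightarrow> nat \<Rightarrow> nat \<Rightarrow> ennreal" where
  "mu2 M J S u i j = (\<integral>\<^sup>+\<omega>. (Tret J S u j \<omega>)^2 \<partial>M i)"

text \<open>m^{[u,u]}_i = E[(X^{[u]}_{n+1})^2 | J_n = i], computed from the kernel\<close>
definition m2 :: "nat \<Rightarrow> (nat \<Rightarrow> nat \<Rightarrow> nat^'d \<Rightarrow> real) \<Rightarrow> 'd \<Rightarrow> nat \<Rightarrow> ennreal" where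
  "m2 s q u i = (\<Sum>j\<in>stE s. \<Sum>\<^sub>\<infinity>k. of_nat ((k $ u)^2) * ennreal (q i j k))"

text \<open>m^{[u]}_{ir} = E[X^{[u]}_{n+1} | J_n = i, J_{n+1} = r], computed from the kernel\<close>
definition m1 :: "(nat \<Rightarrow> nat \<Rightarrow> nat^'d \<Rightarrow> real) \<Rightarrow> 'd \<Rightarrow> nat \<Rightarrow> nat \<Rightarrow> ennreal" where
  "m1 q u i r = (\<Sum>\<^sub>\<infinity>k. of_nat (k $ u) * ennreal (q i r k)) / ennreal (pker q i r)"

text \<open>ergodic: each marginal one-dimensional-time MRC (J, S^{[u]}) is positive recurrent and aperiodic\<close>
definition ergodic ::
  "nat \<Rightarrow> (nat \<Rightarrow> 'w measure) \<Rightarrow> (nat \<Rightarrow> 'w \<Rightarrow> nat) \<Rightarrow> (nat \<Rightarrow> 'w \<Rightarrow> nat^'d) \<Rightarrow> bool" where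
  "ergodic s M J S \<longleftrightarrow> (\<forall>u. \<forall>j\<in>stE s.
      (AE \<omega> in M j. Tret J S u j \<omega> < \<infinity>) \<and>
      mu1 M J S u j j < \<infinity> \<and>
      Gcd {k::nat. k > 0 \<and> measure (M j) {\<omega>\<in>space (M j). Tret J S u j \<omega> = of_nat k} > 0} = 1)"

end

theory Submission
  imports Defs
begin


lemma nn_integral_countable_rv:
  fixes Y :: "'w \<Rightarrow> 'a::countable" and F :: "'a \<Rightarrow> ennreal"
  assumes [measurable]: "Y \<in> measurable N (count_space UNIV)"
  shows "(\<integral>\<^sup>+\<omega>. F (Y \<omega>) \<partial>N) = (\<integral>\<^sup>+y. F y * emeasure N {\<omega>\<in>space N. Y \<omega> = y} \<partial>count_space UNIV)"
proof -
  have "(\<integral>\<^sup>+\<omega>. F (Y \<omega>) \<partial>N) = (\<integral>\<^sup>+\<omega>. (\<integral>\<^sup>+y. F y * indicator {\<omega>\<in>space N. Y \<omega> = y} \<omega> \<partial>count_space UNIV) \<partial>N)"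
  proof (rule nn_integral_cong)
    fix \<omega> assume w: "\<omega> \<in> space N"
    have "(\<integral>\<^sup>+y. F y * indicator {\<omega>\<in>space N. Y \<omega> = y} \<omega> \<partial>count_space UNIV)
        = (\<integral>\<^sup>+y. F y * indicator {Y \<omega>} y \<partial>count_space UNIV)"
      using w by (intro nn_integral_cong) (auto split: split_indicator)
    also have "\<dots> = F (Y \<omega>)" by simp
    finally show "F (Y \<omega>) = (\<integral>\<^sup>+y. F y * indicator {\<omega>\<in>space N. Y \<omega> = y} \<omega> \<partial>count_space UNIV)" by simp
  qed
  also have "\<dots> = (\<integral>\<^sup>+y. (\<integral>\<^sup>+\<omega>. F y * indicator {\<omega>\<in>space N. Y \<omega> = y} \<omega> \<partial>N) \<partial>count_space UNIV)"
    by (rule nn_integral_count_space_nn_integral) auto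
  also have "\<dots> = (\<integral>\<^sup>+y. F y * emeasure N {\<omega>\<in>space N. Y \<omega> = y} \<partial>count_space UNIV)"
    by (intro nn_integral_cong nn_integral_cmult_indicator) auto
  finally show ?thesis .
qed

lemma nn_integral_count_pair:
  fixes f :: "'a::countable \<times> 'b::countable \<Rightarrow> ennreal"
  shows "(\<integral>\<^sup>+p. f p \<partial>count_space UNIV) = (\<integral>\<^sup>+x. \<integral>\<^sup>+y. f (x,y) \<partial>count_space UNIV \<partial>count_space UNIV)"
proof -
  have e: "count_space (UNIV::'a set) \<Otimes>\<^sub>M count_space (UNIV::'b set) = count_space UNIV"
    using pair_measure_countable[of "UNIV::'a set" "UNIV::'b set"] by simp
  have "sigma_finite_measure (count_space (UNIV::'b set))"
    by (rule sigma_finite_measure_count_space_countable) simp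
  from sigma_finite_measure.nn_integral_fst[OF this, of f "count_space (UNIV::'a set)"]
  show ?thesis unfolding e by simp
qed

lemma infsum_count_space:
  fixes f :: "'a::countable \<Rightarrow> ennreal"
  shows "infsum f UNIV = (\<integral>\<^sup>+x. f x \<partial>count_space UNIV)"
proof (rule antisym)
  have "infsum f UNIV = (SUP F\<in>{F. finite F \<and> F\<subseteq>UNIV}. sum f F)"
    by (rule nonneg_infsum_complete) simp
  also have "\<dots> \<le> (\<integral>\<^sup>+x. f x \<partial>count_space UNIV)"
  proof (rule SUP_least)
    fix F :: "'a set" assume "F \<in> {F. finite F \<and> F\<subseteq>UNIV}"
    then have "finite F" by simp
    then have "sum f F = (\<integral>\<^sup>+x. f x \<partial>count_space F)" by (simp add: nn_integral_count_space_finite)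
    also have "\<dots> = (\<integral>\<^sup>+x. f x * indicator F x \<partial>count_space UNIV)"
      by (rule nn_integral_count_space_indicator) simp
    also have "\<dots> \<le> (\<integral>\<^sup>+x. f x \<partial>count_space UNIV)"
      by (intro nn_integral_mono) (auto split: split_indicator)
    finally show "sum f F \<le> (\<integral>\<^sup>+x. f x \<partial>count_space UNIV)" .
  qed
  finally show "infsum f UNIV \<le> (\<integral>\<^sup>+x. f x \<partial>count_space UNIV)" .
next
  define A where "A n = {x::'a. to_nat x < n}" for n
  have finA: "finite (A n)" for n
  proof -
    have "A n \<subseteq> from_nat ` {..<n}"
    proof
      fix x assume "x \<in> A n" then show "x \<in> from_nat ` {..<n}"
        by (intro image_eqI[of x from_nat "to_nat x"]) (auto simp: A_def)
    qed
    then show ?thesis by (rule finite_subset) simp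
  qed
  have inc: "incseq (\<lambda>n x. f x * indicator (A n) x)"
    by (auto simp: incseq_def le_fun_def A_def split: split_indicator)
  have sup: "(SUP n. f x * indicator (A n) x) = f x" for x
  proof (rule antisym)
    show "(SUP n. f x * indicator (A n) x) \<le> f x" by (rule SUP_least) (auto split: split_indicator)
    have "f x = f x * indicator (A (Suc (to_nat x))) x" by (simp add: A_def)
    also have "\<dots> \<le> (SUP n. f x * indicator (A n) x)" by (rule SUP_upper) simp
    finally show "f x \<le> (SUP n. f x * indicator (A n) x)" .
  qed
  have "(\<integral>\<^sup>+x. f x \<partial>count_space UNIV) = (\<integral>\<^sup>+x. (SUP n. f x * indicator (A n) x) \<partial>count_space UNIV)"
    by (simp add: sup)
  also have "\<dots> = (SUP n. (\<integral>\<^sup>+x. f x * indicator (A n) x \<partial>count_space UNIV))"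
    by (rule nn_integral_monotone_convergence_SUP[OF inc]) simp
  also have "\<dots> = (SUP n. sum f (A n))"
  proof (rule SUP_cong[OF refl])
    fix n
    have "(\<integral>\<^sup>+x. f x * indicator (A n) x \<partial>count_space UNIV) = (\<integral>\<^sup>+x. f x \<partial>count_space (A n))"
      by (rule nn_integral_count_space_indicator[symmetric]) simp
    then show "(\<integral>\<^sup>+x. f x * indicator (A n) x \<partial>count_space UNIV) = sum f (A n)"
      by (simp add: nn_integral_count_space_finite finA)
  qed
  also have "\<dots> \<le> (SUP F\<in>{F. finite F \<and> F\<subseteq>UNIV}. sum f F)"
    by (rule SUP_least) (rule SUP_upper, simp add: finA)
  also have "\<dots> = infsum f UNIV"
    by (rule nonneg_infsum_complete[symmetric]) simp
  finally show "(\<integral>\<^sup>+x. f x \<partial>count_space UNIV) \<le> infsum f UNIV" .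
qed

lemma ennreal_infsum_real:
  fixes f :: "'a \<Rightarrow> real"
  assumes "f summable_on A" "\<And>x. x \<in> A \<Longrightarrow> f x \<ge> 0"
  shows "ennreal (infsum f A) = infsum (\<lambda>x. ennreal (f x)) A"
proof -
  have "ennreal (infsum f A) = (SUP F\<in>{F. finite F \<and> F \<subseteq> A}. (ennreal (sum f F)))"
    by (rule infsum_nonneg_is_SUPREMUM_ennreal[OF assms])
  also have "\<dots> = (SUP F\<in>{F. finite F \<and> F \<subseteq> A}. (\<Sum>x\<in>F. ennreal (f x)))"
    using assms(2) by (intro SUP_cong refl) (auto intro!: sum_ennreal[symmetric])
  also have "\<dots> = infsum (\<lambda>x. ennreal (f x)) A"
    by (rule nonneg_infsum_complete[symmetric]) simp
  finally show ?thesis .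
qed

locale mrc =
  fixes s :: nat and q :: "nat \<Rightarrow> nat \<Rightarrow> nat^'d \<Rightarrow> real" and M :: "nat \<Rightarrow> 'w measure"
    and J :: "nat \<Rightarrow> 'w \<Rightarrow> nat" and S :: "nat \<Rightarrow> 'w \<Rightarrow> nat^'d"
  assumes mtmrc: "MTMRC s q M J S"
begin

abbreviation "E \<equiv> stE s"

lemma finE[simp]: "finite E" by (simp add: stE_def)

lemma prob[simp]: "i \<in> E \<Longrightarrow> prob_space (M i)"
  using mtmrc unfolding MTMRC_def by auto

lemma measJ[measurable]: "i \<in> E \<Longrightarrow> J n \<in> measurable (M i) (count_space UNIV)"
  using mtmrc unfolding MTMRC_def by auto

lemma measS[measurable]: "i \<in> E \<Longrightarrow> S n \<in> measurable (M i) (count_space UNIV)"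
  using mtmrc unfolding MTMRC_def by auto

lemma J0: "i \<in> E \<Longrightarrow> \<omega> \<in> space (M i) \<Longrightarrow> J 0 \<omega> = i"
  using mtmrc unfolding MTMRC_def by auto

lemma S0: "i \<in> E \<Longrightarrow> \<omega> \<in> space (M i) \<Longrightarrow> S 0 \<omega> = 0"
  using mtmrc unfolding MTMRC_def by auto

lemma JE: "i \<in> E \<Longrightarrow> \<omega> \<in> space (M i) \<Longrightarrow> J n \<omega> \<in> E"
  using mtmrc unfolding MTMRC_def by auto

lemma Sless: "i \<in> E \<Longrightarrow> \<omega> \<in> space (M i) \<Longrightarrow> vless (S n \<omega>) (S (Suc n) \<omega>)"
  using mtmrc unfolding MTMRC_def by auto

lemma q_nonneg: "q a r k \<ge> 0"
  using mtmrc unfolding MTMRC_def sm_kernel_def by auto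

lemma q_hassum: "a \<in> E \<Longrightarrow> ((\<lambda>(r,k). q a r k) has_sum 1) (E \<times> UNIV)"
  using mtmrc unfolding MTMRC_def sm_kernel_def by auto

lemma markov_raw: "i \<in> E \<Longrightarrow>
  measure (M i) {\<omega>\<in>space (M i). (\<forall>m\<le>n. J m \<omega> = js m \<and> S m \<omega> = ks m) \<and>
                                        J (Suc n) \<omega> = r \<and> incr S n \<omega> = k}
           = q (js n) r k * measure (M i) {\<omega>\<in>space (M i). \<forall>m\<le>n. J m \<omega> = js m \<and> S m \<omega> = ks m}"
  using mtmrc unfolding MTMRC_def by blast

definition hist :: "nat \<Rightarrow> 'w \<Rightarrow> (nat \<times> (nat^'d)) list" where
  "hist n \<omega> = map (\<lambda>m. (J m \<omega>, S m \<omega>)) [0..<Suc n]"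

lemma hist_Suc: "hist (Suc n) \<omega> = hist n \<omega> @ [(J (Suc n) \<omega>, S (Suc n) \<omega>)]"
  by (simp add: hist_def)

lemma last_hist[simp]: "last (hist n \<omega>) = (J n \<omega>, S n \<omega>)"
  by (simp add: hist_def)

lemma butlast_hist_Suc[simp]: "butlast (hist (Suc n) \<omega>) = hist n \<omega>"
  by (simp add: hist_Suc)

lemma length_hist[simp]: "length (hist n \<omega>) = Suc n"
  by (simp add: hist_def)

lemma meas_hist[measurable]: "i \<in> E \<Longrightarrow> hist n \<in> measurable (M i) (count_space UNIV)"
proof (induction n)
  case 0
  have "hist 0 = (\<lambda>\<omega>. [(J 0 \<omega>, S 0 \<omega>)])" by (auto simp: hist_def)
  then show ?case using 0 by simp
next
  case (Suc n)
  have "hist (Suc n) = (\<lambda>\<omega>. hist n \<omega> @ [(J (Suc n) \<omega>, S (Suc n) \<omega>)])" by (auto simp: hist_Suc)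
  then show ?case using Suc by simp
qed

lemma meas_incr[measurable]: "i \<in> E \<Longrightarrow> incr S n \<in> measurable (M i) (count_space UNIV)"
proof -
  assume i: "i \<in> E"
  have "incr S n = (\<lambda>\<omega>. (\<lambda>a b. (\<chi> u. b $ u - a $ u)) (S n \<omega>) (S (Suc n) \<omega>))"
    by (auto simp: incr_def)
  then show ?thesis using i by simp
qed

lemma hist_eq_iff: "hist n \<omega> = h \<longleftrightarrow> length h = Suc n \<and> (\<forall>m\<le>n. J m \<omega> = fst (h ! m) \<and> S m \<omega> = snd (h ! m))"
proof -
  have "hist n \<omega> = h \<longleftrightarrow> length h = Suc n \<and> (\<forall>m<Suc n. (J m \<omega>, S m \<omega>) = h ! m)"
    unfolding hist_def list_eq_iff_nth_eq by (auto simp del: upt_Suc)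
  then show ?thesis by (auto simp: less_Suc_eq_le prod_eq_iff)
qed

lemma cyl:
  assumes i: "i \<in> E"
  shows "emeasure (M i) {\<omega>\<in>space (M i). hist n \<omega> = h \<and> J (Suc n) \<omega> = r \<and> incr S n \<omega> = k}
       = ennreal (q (fst (last h)) r k) * emeasure (M i) {\<omega>\<in>space (M i). hist n \<omega> = h}"
proof (cases "length h = Suc n")
  case True
  interpret prob_space "M i" using i by simp
  define js where "js m = fst (h ! m)" for m
  define ks where "ks m = snd (h ! m)" for m
  have "h \<noteq> []" using True by auto
  then have l: "fst (last h) = js n" using True by (simp add: js_def last_conv_nth)
  have A: "{\<omega>\<in>space (M i). hist n \<omega> = h \<and> J (Suc n) \<omega> = r \<and> incr S n \<omega> = k}
     = {\<omega>\<in>space (M i). (\<forall>m\<le>n. J m \<omega> = js m \<and> S m \<omega> = ks m) \<and> J (Suc n) \<omega> = r \<and> incr S n \<omega> = k}"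
    using True by (auto simp: hist_eq_iff js_def ks_def)
  have B: "{\<omega>\<in>space (M i). hist n \<omega> = h} = {\<omega>\<in>space (M i). (\<forall>m\<le>n. J m \<omega> = js m \<and> S m \<omega> = ks m)}"
    using True by (auto simp: hist_eq_iff js_def ks_def)
  show ?thesis
    unfolding A B l emeasure_eq_measure markov_raw[OF i]
    by (simp add: ennreal_mult q_nonneg)
next
  case False
  then have "\<And>\<omega>. hist n \<omega> \<noteq> h" by (metis length_hist)
  then show ?thesis by simp
qed

definition Q :: "nat \<Rightarrow> (nat \<Rightarrow> nat^'d \<Rightarrow> ennreal) \<Rightarrow> ennreal" where
  "Q a g = (\<integral>\<^sup>+p. ennreal (q a (fst p) (snd p)) * g (fst p) (snd p) \<partial>count_space UNIV)"

definition histfun :: "nat \<Rightarrow> ('w \<Rightarrow> ennreal) \<Rightarrow> bool" where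
  "histfun n f \<longleftrightarrow> (\<exists>F. \<forall>\<omega>. f \<omega> = F (hist n \<omega>))"

lemma P1:
  assumes i: "i \<in> E" and hf: "histfun n f"
  shows "(\<integral>\<^sup>+\<omega>. f \<omega> * g (J (Suc n) \<omega>) (incr S n \<omega>) \<partial>M i) = (\<integral>\<^sup>+\<omega>. f \<omega> * Q (J n \<omega>) g \<partial>M i)"
proof -
  obtain F where F: "\<And>\<omega>. f \<omega> = F (hist n \<omega>)" using hf unfolding histfun_def by blast
  define \<Phi> where "\<Phi> = (\<lambda>(h::(nat \<times> (nat^'d)) list, rk::nat \<times> (nat^'d)). F h * g (fst rk) (snd rk))"
  let ?e = "\<lambda>h. emeasure (M i) {\<omega>\<in>space (M i). hist n \<omega> = h}"
  have "(\<integral>\<^sup>+\<omega>. f \<omega> * g (J (Suc n) \<omega>) (incr S n \<omega>) \<partial>M i)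
      = (\<integral>\<^sup>+\<omega>. \<Phi> (hist n \<omega>, (J (Suc n) \<omega>, incr S n \<omega>)) \<partial>M i)"
    by (simp add: F \<Phi>_def)
  also have "\<dots> = (\<integral>\<^sup>+y. \<Phi> y * emeasure (M i) {\<omega>\<in>space (M i). (hist n \<omega>, (J (Suc n) \<omega>, incr S n \<omega>)) = y} \<partial>count_space UNIV)"
    by (rule nn_integral_countable_rv) (simp add: i)
  also have "\<dots> = (\<integral>\<^sup>+h. \<integral>\<^sup>+rk. \<Phi> (h,rk) * emeasure (M i) {\<omega>\<in>space (M i). (hist n \<omega>, (J (Suc n) \<omega>, incr S n \<omega>)) = (h,rk)} \<partial>count_space UNIV \<partial>count_space UNIV)"
    by (rule nn_integral_count_pair)
  also have "\<dots> = (\<integral>\<^sup>+h. F h * ?e h * Q (fst (last h)) g \<partial>count_space UNIV)"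
  proof (rule nn_integral_cong)
    fix h :: "(nat \<times> (nat^'d)) list"
    have "(\<integral>\<^sup>+rk. \<Phi> (h,rk) * emeasure (M i) {\<omega>\<in>space (M i). (hist n \<omega>, (J (Suc n) \<omega>, incr S n \<omega>)) = (h,rk)} \<partial>count_space UNIV)
       = (\<integral>\<^sup>+rk. (F h * ?e h) * (ennreal (q (fst (last h)) (fst rk) (snd rk)) * g (fst rk) (snd rk)) \<partial>count_space UNIV)"
    proof (rule nn_integral_cong)
      fix rk :: "nat \<times> (nat^'d)"
      obtain r k where rk: "rk = (r,k)" by fastforce
      show "\<Phi> (h,rk) * emeasure (M i) {\<omega>\<in>space (M i). (hist n \<omega>, (J (Suc n) \<omega>, incr S n \<omega>)) = (h,rk)}
         = (F h * ?e h) * (ennreal (q (fst (last h)) (fst rk) (snd rk)) * g (fst rk) (snd rk))"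
        using cyl[OF i, of n h r k] by (simp add: rk \<Phi>_def mult_ac)
    qed
    also have "\<dots> = F h * ?e h * Q (fst (last h)) g"
      unfolding Q_def by (rule nn_integral_cmult) simp
    finally show "(\<integral>\<^sup>+rk. \<Phi> (h,rk) * emeasure (M i) {\<omega>\<in>space (M i). (hist n \<omega>, (J (Suc n) \<omega>, incr S n \<omega>)) = (h,rk)} \<partial>count_space UNIV)
       = F h * ?e h * Q (fst (last h)) g" .
  qed
  also have "\<dots> = (\<integral>\<^sup>+\<omega>. (\<lambda>h. F h * Q (fst (last h)) g) (hist n \<omega>) \<partial>M i)"
    by (subst nn_integral_countable_rv) (auto simp: i mult_ac intro!: nn_integral_cong)
  also have "\<dots> = (\<integral>\<^sup>+\<omega>. f \<omega> * Q (J n \<omega>) g \<partial>M i)"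
    by (simp add: F)
  finally show ?thesis .
qed

lemma hist_eq_iff2: "hist n \<omega> = hist n \<omega>' \<longleftrightarrow> (\<forall>m\<le>n. J m \<omega> = J m \<omega>' \<and> S m \<omega> = S m \<omega>')"
  unfolding hist_eq_iff[of n \<omega> "hist n \<omega>'"] by (auto simp: hist_def nth_map_upt simp del: upt_Suc)

lemma histfunI:
  assumes "\<And>\<omega> \<omega>'. (\<forall>m\<le>n. J m \<omega> = J m \<omega>' \<and> S m \<omega> = S m \<omega>') \<Longrightarrow> f \<omega> = f \<omega>'"
  shows "histfun n f"
  unfolding histfun_def
proof (intro exI allI)
  fix \<omega>
  define w where "w = (SOME \<omega>'. hist n \<omega>' = hist n \<omega>)"
  have "hist n w = hist n \<omega>" unfolding w_def by (rule someI) simp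
  then have "\<forall>m\<le>n. J m \<omega> = J m w \<and> S m \<omega> = S m w" unfolding hist_eq_iff2 by auto
  then show "f \<omega> = f (SOME \<omega>'. hist n \<omega>' = hist n \<omega>)"
    unfolding w_def[symmetric] by (rule assms)
qed

lemma histfunD:
  assumes "histfun n f" "n \<le> n'" "\<forall>m\<le>n'. J m \<omega> = J m \<omega>' \<and> S m \<omega> = S m \<omega>'"
  shows "f \<omega> = f \<omega>'"
proof -
  obtain F where F: "\<And>\<omega>. f \<omega> = F (hist n \<omega>)" using assms(1) unfolding histfun_def by blast
  have "hist n \<omega> = hist n \<omega>'" unfolding hist_eq_iff2 using assms(2,3) by auto
  then show ?thesis by (simp add: F)
qed

lemma histfun_meas: "histfun n f \<Longrightarrow> i \<in> E \<Longrightarrow> f \<in> borel_measurable (M i)"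
proof -
  assume "histfun n f" "i \<in> E"
  then obtain F where F: "f = (\<lambda>\<omega>. F (hist n \<omega>))" unfolding histfun_def by blast
  show ?thesis unfolding F using \<open>i \<in> E\<close> by measurable
qed

lemma histfun_const[simp]: "histfun n (\<lambda>_. c)"
  by (rule histfunI) simp

lemma histfun_Suc_mult:
  assumes "histfun n f"
  shows "histfun (Suc n) (\<lambda>\<omega>. f \<omega> * g (J (Suc n) \<omega>) (incr S n \<omega>))"
proof (rule histfunI)
  fix \<omega> \<omega>' assume h: "\<forall>m\<le>Suc n. J m \<omega> = J m \<omega>' \<and> S m \<omega> = S m \<omega>'"
  have "f \<omega> = f \<omega>'" using histfunD[OF assms _ h] by simp
  moreover have "incr S n \<omega> = incr S n \<omega>'" using h by (simp add: incr_def)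
  ultimately show "f \<omega> * g (J (Suc n) \<omega>) (incr S n \<omega>) = f \<omega>' * g (J (Suc n) \<omega>') (incr S n \<omega>')"
    using h by simp
qed

lemma q_outside: assumes a: "a \<in> E" and r: "r \<notin> E" shows "q a r k = 0"
proof -
  interpret prob_space "M a" using a by simp
  have 1: "{\<omega>\<in>space (M a). \<forall>m\<le>0. J m \<omega> = (\<lambda>_. a) m \<and> S m \<omega> = (\<lambda>_. 0) m} = space (M a)"
    using J0[OF a] S0[OF a] by auto
  have 2: "{\<omega>\<in>space (M a). (\<forall>m\<le>0. J m \<omega> = (\<lambda>_. a) m \<and> S m \<omega> = (\<lambda>_. 0) m) \<and> J (Suc 0) \<omega> = r \<and> incr S 0 \<omega> = k} = {}"
    using JE[OF a] r by blast
  show ?thesis using markov_raw[OF a, of 0 "\<lambda>_. a" "\<lambda>_. 0" r k] unfolding 1 2 by (simp add: prob_space)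
qed

lemma Q_split:
  assumes a: "a \<in> E"
  shows "Q a g = (\<Sum>r\<in>E. \<integral>\<^sup>+k. ennreal (q a r k) * g r k \<partial>count_space UNIV)"
proof -
  have "Q a g = (\<integral>\<^sup>+r. \<integral>\<^sup>+k. ennreal (q a r k) * g r k \<partial>count_space UNIV \<partial>count_space UNIV)"
    unfolding Q_def by (subst nn_integral_count_pair) simp
  also have "\<dots> = (\<Sum>r\<in>E. \<integral>\<^sup>+k. ennreal (q a r k) * g r k \<partial>count_space UNIV)"
    by (rule nn_integral_count_space') (auto simp: q_outside[OF a])
  finally show ?thesis .
qed

lemma q_summable: assumes a: "a \<in> E" shows "q a r summable_on UNIV"
proof (cases "r \<in> E")
  case True
  have "(\<lambda>(r,k). q a r k) summable_on (E \<times> UNIV)" using q_hassum[OF a] by (auto simp: summable_on_def)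
  then have "(\<lambda>(r,k). q a r k) summable_on (Pair r ` UNIV)"
    by (rule summable_on_subset_banach) (use True in auto)
  then have "((\<lambda>(r,k). q a r k) \<circ> Pair r) summable_on UNIV"
    by (subst summable_on_reindex[symmetric]) (auto simp: inj_on_def)
  then show ?thesis by (simp add: o_def)
next
  case False
  then have "q a r = (\<lambda>_. 0)" using q_outside[OF a] by auto
  then show ?thesis by simp
qed

lemma pker_ennreal: assumes a: "a \<in> E"
  shows "ennreal (pker q a r) = (\<integral>\<^sup>+k. ennreal (q a r k) \<partial>count_space UNIV)"
  unfolding pker_def
  by (subst ennreal_infsum_real[OF q_summable[OF a]]) (auto simp: q_nonneg infsum_count_space)

lemma pker_nonneg: "pker q a r \<ge> 0"
  unfolding pker_def by (rule infsum_nonneg) (simp add: q_nonneg)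

lemma Q_indicator: assumes a: "a \<in> E" and i: "i \<in> E"
  shows "Q a (\<lambda>r k. if r = i then 1 else 0) = ennreal (pker q a i)"
proof -
  have "Q a (\<lambda>r k. if r = i then 1 else 0) = (\<Sum>r\<in>E. if r = i then \<integral>\<^sup>+k. ennreal (q a r k) \<partial>count_space UNIV else 0)"
    unfolding Q_split[OF a] by (intro sum.cong refl) auto
  also have "\<dots> = ennreal (pker q a i)" using i by (simp add: pker_ennreal[OF a])
  finally show ?thesis .
qed

end

locale mrcj = mrc s q M J S for s :: nat and q :: "nat \<Rightarrow> nat \<Rightarrow> nat^'d \<Rightarrow> real" and M :: "nat \<Rightarrow> 'w measure"
    and J :: "nat \<Rightarrow> 'w \<Rightarrow> nat" and S :: "nat \<Rightarrow> 'w \<Rightarrow> nat^'d" +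
  fixes j :: nat and u :: 'd
  assumes jE: "j \<in> E"
begin

definition fut :: "nat \<Rightarrow> nat \<Rightarrow> 'w \<Rightarrow> bool" where
  "fut n l \<omega> \<longleftrightarrow> (\<forall>l'\<in>{Suc n..n+l}. J l' \<omega> \<noteq> j)"

definition W :: "(nat^'d \<Rightarrow> ennreal) \<Rightarrow> nat \<Rightarrow> nat \<Rightarrow> 'w \<Rightarrow> ennreal" where
  "W \<psi> n l \<omega> = (if fut n l \<omega> then \<psi> (incr S (n+l) \<omega>) else 0)"

fun wfun :: "(nat^'d \<Rightarrow> ennreal) \<Rightarrow> nat \<Rightarrow> nat \<Rightarrow> ennreal" where
  "wfun \<psi> 0 r = Q r (\<lambda>r' k. \<psi> k)"
| "wfun \<psi> (Suc l) r = Q r (\<lambda>r' k. if r' \<noteq> j then wfun \<psi> l r' else 0)"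

lemma fut_0[simp]: "fut n 0 \<omega>" by (simp add: fut_def)

lemma fut_Suc: "fut n (Suc l) \<omega> \<longleftrightarrow> J (Suc n) \<omega> \<noteq> j \<and> fut (Suc n) l \<omega>"
proof -
  have "{Suc n..n + Suc l} = insert (Suc n) {Suc (Suc n)..Suc n + l}" by auto
  then show ?thesis unfolding fut_def by auto
qed

lemma W_Suc: "W \<psi> n (Suc l) \<omega> = (if J (Suc n) \<omega> \<noteq> j then 1 else 0) * W \<psi> (Suc n) l \<omega>"
  by (simp add: W_def fut_Suc)

lemma MK:
  assumes "i \<in> E" "histfun n f"
  shows "(\<integral>\<^sup>+\<omega>. f \<omega> * W \<psi> n l \<omega> \<partial>M i) = (\<integral>\<^sup>+\<omega>. f \<omega> * wfun \<psi> l (J n \<omega>) \<partial>M i)"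
  using assms(2)
proof (induction l arbitrary: n f)
  case 0
  then show ?case using P1[OF assms(1) 0, of "\<lambda>r k. \<psi> k"] by (simp add: W_def)
next
  case (Suc l)
  have h: "histfun (Suc n) (\<lambda>\<omega>. f \<omega> * (\<lambda>r k. if r \<noteq> j then 1 else 0) (J (Suc n) \<omega>) (incr S n \<omega>))"
    by (rule histfun_Suc_mult[OF Suc.prems])
  have "(\<integral>\<^sup>+\<omega>. f \<omega> * W \<psi> n (Suc l) \<omega> \<partial>M i)
      = (\<integral>\<^sup>+\<omega>. (f \<omega> * (\<lambda>r k. if r \<noteq> j then 1 else 0) (J (Suc n) \<omega>) (incr S n \<omega>)) * W \<psi> (Suc n) l \<omega> \<partial>M i)"
    by (simp add: W_Suc mult_ac)
  also have "\<dots> = (\<integral>\<^sup>+\<omega>. (f \<omega> * (\<lambda>r k. if r \<noteq> j then 1 else 0) (J (Suc n) \<omega>) (incr S n \<omega>)) * wfun \<psi> l (J (Suc n) \<omega>) \<partial>M i)"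
    by (rule Suc.IH[OF h])
  also have "\<dots> = (\<integral>\<^sup>+\<omega>. f \<omega> * (\<lambda>r k. if r \<noteq> j then wfun \<psi> l r else 0) (J (Suc n) \<omega>) (incr S n \<omega>) \<partial>M i)"
    by (intro nn_integral_cong) simp
  also have "\<dots> = (\<integral>\<^sup>+\<omega>. f \<omega> * wfun \<psi> (Suc l) (J n \<omega>) \<partial>M i)"
    by (subst P1[OF assms(1) Suc.prems]) simp
  finally show ?case .
qed

end


lemma suminf_ennreal_head: "(\<Sum>n. f n :: ennreal) = f 0 + (\<Sum>n. f (Suc n))"
  using suminf_offset[of f 1] by (simp add: add.commute)

lemma sq_expand: "(x + y)^2 = x*(x+2*y) + (y::'a::comm_semiring_1)^2"
  by (simp add: power2_eq_square algebra_simps mult_2_right)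

lemma sq_suminf_finite:
  fixes a :: "nat \<Rightarrow> ennreal"
  assumes "\<forall>m\<ge>N. a m = 0"
  shows "(\<Sum>m. a m)^2 = (\<Sum>m. a m * (a m + 2 * (\<Sum>l. a (Suc m + l))))"
  using assms
proof (induction N arbitrary: a)
  case 0
  then show ?case by simp
next
  case (Suc N)
  define b where "b m = a (Suc m)" for m
  have hb: "\<forall>m\<ge>N. b m = 0" using Suc.prems by (simp add: b_def)
  have IH: "(\<Sum>m. b m)^2 = (\<Sum>m. b m * (b m + 2 * (\<Sum>l. b (Suc m + l))))"
    by (rule Suc.IH[OF hb])
  have A: "(\<Sum>m. a m) = a 0 + (\<Sum>m. b m)" unfolding b_def by (rule suminf_ennreal_head)
  have B: "(\<Sum>m. a m * (a m + 2 * (\<Sum>l. a (Suc m + l))))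
      = a 0 * (a 0 + 2 * (\<Sum>m. b m)) + (\<Sum>m. b m * (b m + 2 * (\<Sum>l. b (Suc m + l))))"
  proof -
    have 1: "(\<Sum>l. a (Suc 0 + l)) = (\<Sum>m. b m)" by (simp add: b_def)
    have 2: "(\<lambda>m. a (Suc m) * (a (Suc m) + 2 * (\<Sum>l. a (Suc (Suc m) + l)))) = (\<lambda>m. b m * (b m + 2 * (\<Sum>l. b (Suc m + l))))"
      by (simp add: b_def)
    show ?thesis by (subst suminf_ennreal_head) (simp only: 1 2)
  qed
  show ?case unfolding A B IH[symmetric] by (rule sq_expand)
qed

context mrcj
begin

lemma meas_fut[measurable]: "i \<in> E \<Longrightarrow> Measurable.pred (M i) (fut n l)"
  unfolding fut_def by measurable

lemma fut_add: "fut n (l1 + l2) \<omega> \<longleftrightarrow> fut n l1 \<omega> \<and> fut (n + l1) l2 \<omega>"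
proof -
  have "{Suc n..n+(l1+l2)} = {Suc n..n+l1} \<union> {Suc (n+l1)..(n+l1)+l2}" by auto
  then show ?thesis unfolding fut_def by (simp only: ball_Un)
qed

definition \<psi>u :: "nat^'d \<Rightarrow> ennreal" where "\<psi>u k = of_nat (k $ u)"
definition \<psi>2 :: "nat^'d \<Rightarrow> ennreal" where "\<psi>2 k = of_nat ((k $ u)^2)"
definition Tp :: "'w \<Rightarrow> ennreal" where "Tp \<omega> = (\<Sum>m. W \<psi>u 0 m \<omega>)"
definition tau :: "'w \<Rightarrow> nat" where "tau \<omega> = (LEAST l. l \<ge> 1 \<and> J l \<omega> = j)"

lemma fut0_iff:
  assumes "\<exists>l\<ge>1. J l \<omega> = j"
  shows "fut 0 m \<omega> \<longleftrightarrow> m < tau \<omega>"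
proof
  have t: "tau \<omega> \<ge> 1 \<and> J (tau \<omega>) \<omega> = j"
    unfolding tau_def using assms by (rule LeastI_ex)
  assume "fut 0 m \<omega>"
  then show "m < tau \<omega>" using t unfolding fut_def by (metis atLeastAtMost_iff add_0 not_less One_nat_def)
next
  assume m: "m < tau \<omega>"
  show "fut 0 m \<omega>" unfolding fut_def
  proof
    fix l assume "l \<in> {Suc 0..0+m}"
    then have "l \<ge> 1" "l < tau \<omega>" using m by auto
    then show "J l \<omega> \<noteq> j" unfolding tau_def using not_less_Least by blast
  qed
qed

lemma S_sum:
  assumes "i \<in> E" "\<omega> \<in> space (M i)"
  shows "(\<Sum>m<N. incr S m \<omega> $ u) = S N \<omega> $ u"
proof (induction N)
  case 0
  then show ?case using S0[OF assms] by simp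
next
  case (Suc N)
  have "S N \<omega> $ u \<le> S (Suc N) \<omega> $ u" using Sless[OF assms, of N] unfolding vless_def by blast
  then show ?case using Suc by (simp add: incr_def)
qed

lemma Tp_support:
  assumes "\<exists>l\<ge>1. J l \<omega> = j"
  shows "\<forall>m\<ge>tau \<omega>. W \<psi>u 0 m \<omega> = 0"
  using fut0_iff[OF assms] by (auto simp: W_def)

lemma Tret_Tp:
  assumes "i \<in> E" "\<omega> \<in> space (M i)" "\<exists>l\<ge>1. J l \<omega> = j"
  shows "Tret J S u j \<omega> = Tp \<omega>"
proof -
  have "Tp \<omega> = (\<Sum>m<tau \<omega>. W \<psi>u 0 m \<omega>)"
    unfolding Tp_def by (rule suminf_finite) (use Tp_support[OF assms(3)] in auto)
  also have "\<dots> = (\<Sum>m<tau \<omega>. of_nat (incr S m \<omega> $ u))"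
    by (intro sum.cong refl) (auto simp: W_def \<psi>u_def fut0_iff[OF assms(3)])
  also have "\<dots> = of_nat (S (tau \<omega>) \<omega> $ u)"
    by (simp only: of_nat_sum[symmetric] S_sum[OF assms(1,2)])
  finally show ?thesis using assms(3) unfolding Tret_def tau_def by simp
qed

lemma histfun_mult: "histfun n f \<Longrightarrow> histfun n g \<Longrightarrow> histfun n (\<lambda>\<omega>. f \<omega> * g \<omega>)"
  by (rule histfunI) (metis histfunD order_refl)

lemma histfun_ind_fut: "n + l \<le> N \<Longrightarrow> histfun N (\<lambda>\<omega>. if fut n l \<omega> then 1 else 0)"
  by (rule histfunI) (auto simp: fut_def)

lemma histfun_W: "histfun (Suc (n+l)) (W \<psi> n l)"
proof (rule histfunI)
  fix \<omega> \<omega>' assume h: "\<forall>m\<le>Suc (n+l). J m \<omega> = J m \<omega>' \<and> S m \<omega> = S m \<omega>'"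
  then have "fut n l \<omega> = fut n l \<omega>'" by (auto simp: fut_def)
  moreover have "incr S (n+l) \<omega> = incr S (n+l) \<omega>'" using h by (simp add: incr_def)
  ultimately show "W \<psi> n l \<omega> = W \<psi> n l \<omega>'" by (simp add: W_def)
qed

lemma meas_W[measurable]: "i \<in> E \<Longrightarrow> W \<psi> n l \<in> borel_measurable (M i)"
  using histfun_W by (rule histfun_meas)

lemma wfun_eq: assumes r: "r \<in> E" shows "wfun \<psi> l r = (\<integral>\<^sup>+\<omega>. W \<psi> 0 l \<omega> \<partial>M r)"
proof -
  interpret prob_space "M r" using r by simp
  have "(\<integral>\<^sup>+\<omega>. W \<psi> 0 l \<omega> \<partial>M r) = (\<integral>\<^sup>+\<omega>. 1 * W \<psi> 0 l \<omega> \<partial>M r)" by simp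
  also have "\<dots> = (\<integral>\<^sup>+\<omega>. 1 * wfun \<psi> l (J 0 \<omega>) \<partial>M r)"
    by (rule MK[OF r histfun_const])
  also have "\<dots> = (\<integral>\<^sup>+\<omega>. wfun \<psi> l r \<partial>M r)"
    by (intro nn_integral_cong) (simp add: J0[OF r])
  also have "\<dots> = wfun \<psi> l r" by (simp add: emeasure_space_1)
  finally show ?thesis ..
qed

lemma split_J:
  assumes i: "i \<in> E" and [measurable]: "Measurable.pred (M i) P"
  shows "(\<integral>\<^sup>+\<omega>. (if P \<omega> then \<phi> (J m \<omega>) else 0) \<partial>M i)
       = (\<Sum>r\<in>E. \<phi> r * emeasure (M i) {\<omega>\<in>space (M i). P \<omega> \<and> J m \<omega> = r})"
proof -
  have "(\<integral>\<^sup>+\<omega>. (if P \<omega> then \<phi> (J m \<omega>) else 0) \<partial>M i)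
      = (\<integral>\<^sup>+\<omega>. (\<Sum>r\<in>E. \<phi> r * indicator {\<omega>\<in>space (M i). P \<omega> \<and> J m \<omega> = r} \<omega>) \<partial>M i)"
  proof (rule nn_integral_cong)
    fix \<omega> assume w: "\<omega> \<in> space (M i)"
    have "(\<Sum>r\<in>E. \<phi> r * indicator {\<omega>\<in>space (M i). P \<omega> \<and> J m \<omega> = r} \<omega>)
        = (\<Sum>r\<in>E. if r = J m \<omega> then (if P \<omega> then \<phi> (J m \<omega>) else 0) else 0)"
      using w by (intro sum.cong refl) (auto split: split_indicator)
    also have "\<dots> = (if P \<omega> then \<phi> (J m \<omega>) else 0)"
      using JE[OF i w, of m] by (simp add: sum.delta)
    finally show "(if P \<omega> then \<phi> (J m \<omega>) else 0) = (\<Sum>r\<in>E. \<phi> r * indicator {\<omega>\<in>space (M i). P \<omega> \<and> J m \<omega> = r} \<omega>)" ..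
  qed
  also have "\<dots> = (\<Sum>r\<in>E. \<phi> r * emeasure (M i) {\<omega>\<in>space (M i). P \<omega> \<and> J m \<omega> = r})"
    using i by (subst nn_integral_sum) (auto intro!: sum.cong nn_integral_cmult_indicator)
  finally show ?thesis .
qed

definition e :: "nat \<Rightarrow> nat \<Rightarrow> ennreal" where
  "e m r = emeasure (M j) {\<omega>\<in>space (M j). fut 0 m \<omega> \<and> J m \<omega> = r}"
definition G :: "nat \<Rightarrow> ennreal" where "G r = (\<Sum>m. e m r)"
definition mu' :: "nat \<Rightarrow> ennreal" where "mu' r = (\<Sum>l. wfun \<psi>u l r)"
definition g1 :: "nat \<Rightarrow> nat^'d \<Rightarrow> ennreal" where "g1 r k = \<psi>u k * (if r \<noteq> j then mu' r else 0)"

definition I :: "nat \<Rightarrow> 'w \<Rightarrow> ennreal" where "I m \<omega> = (if fut 0 m \<omega> then 1 else 0)"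
definition A2 :: "nat \<Rightarrow> 'w \<Rightarrow> ennreal" where "A2 m \<omega> = I m \<omega> * \<psi>2 (incr S m \<omega>)"
definition Fm :: "nat \<Rightarrow> 'w \<Rightarrow> ennreal" where
  "Fm m \<omega> = I m \<omega> * (\<lambda>r k. \<psi>u k * (if r \<noteq> j then 1 else 0)) (J (Suc m) \<omega>) (incr S m \<omega>)"
definition B :: "nat \<Rightarrow> 'w \<Rightarrow> ennreal" where "B m \<omega> = Fm m \<omega> * (\<Sum>l. W \<psi>u (Suc m) l \<omega>)"

lemma histfun_I: "histfun m (I m)"
  unfolding I_def by (rule histfun_ind_fut) simp

lemma histfun_Fm: "histfun (Suc m) (Fm m)"
  unfolding Fm_def by (rule histfun_Suc_mult[OF histfun_I])

lemma histfun_A2: "histfun (Suc m) (A2 m)"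
  unfolding A2_def using histfun_Suc_mult[OF histfun_I, of m "\<lambda>r k. \<psi>2 k"] by simp

lemma meas_I[measurable]: "i \<in> E \<Longrightarrow> I m \<in> borel_measurable (M i)"
  using histfun_I by (rule histfun_meas)
lemma meas_Fm[measurable]: "i \<in> E \<Longrightarrow> Fm m \<in> borel_measurable (M i)"
  using histfun_Fm by (rule histfun_meas)
lemma meas_A2[measurable]: "i \<in> E \<Longrightarrow> A2 m \<in> borel_measurable (M i)"
  using histfun_A2 by (rule histfun_meas)
lemma meas_B[measurable]: "i \<in> E \<Longrightarrow> B m \<in> borel_measurable (M i)"
  unfolding B_def by measurable

lemma pred_fut_J[measurable]: "i \<in> E \<Longrightarrow> Measurable.pred (M i) (\<lambda>\<omega>. fut 0 m \<omega>)"
  by measurable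

lemma sq_pointwise:
  assumes ret: "\<exists>l\<ge>1. J l \<omega> = j"
  shows "(Tp \<omega>)^2 = (\<Sum>m. A2 m \<omega> + 2 * B m \<omega>)"
proof -
  have "(Tp \<omega>)^2 = (\<Sum>m. W \<psi>u 0 m \<omega> * (W \<psi>u 0 m \<omega> + 2 * (\<Sum>l. W \<psi>u 0 (Suc m + l) \<omega>)))"
    unfolding Tp_def by (rule sq_suminf_finite[OF Tp_support[OF ret]])
  also have "\<dots> = (\<Sum>m. A2 m \<omega> + 2 * B m \<omega>)"
  proof (rule suminf_cong)
    fix m
    have 1: "W \<psi>u 0 m \<omega> * W \<psi>u 0 m \<omega> = A2 m \<omega>"
      by (simp add: W_def A2_def I_def \<psi>u_def \<psi>2_def power2_eq_square)
    have 2: "W \<psi>u 0 m \<omega> * W \<psi>u 0 (Suc m + l) \<omega> = Fm m \<omega> * W \<psi>u (Suc m) l \<omega>" for l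
    proof -
      have f: "fut 0 (Suc (m + l)) \<omega> \<longleftrightarrow> fut 0 m \<omega> \<and> J (Suc m) \<omega> \<noteq> j \<and> fut (Suc m) l \<omega>"
        using fut_add[of 0 m "Suc l" \<omega>] by (simp add: fut_Suc)
      show ?thesis by (simp add: W_def Fm_def I_def f)
    qed
    have 3: "W \<psi>u 0 m \<omega> * (\<Sum>l. W \<psi>u 0 (Suc m + l) \<omega>) = B m \<omega>"
    proof -
      have "W \<psi>u 0 m \<omega> * (\<Sum>l. W \<psi>u 0 (Suc m + l) \<omega>) = (\<Sum>l. W \<psi>u 0 m \<omega> * W \<psi>u 0 (Suc m + l) \<omega>)"
        by (rule ennreal_suminf_cmult[symmetric])
      also have "\<dots> = (\<Sum>l. Fm m \<omega> * W \<psi>u (Suc m) l \<omega>)" by (rule suminf_cong) (rule 2)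
      also have "\<dots> = B m \<omega>" unfolding B_def by (rule ennreal_suminf_cmult)
      finally show ?thesis .
    qed
    have 4: "W \<psi>u 0 m \<omega> * (W \<psi>u 0 m \<omega> + 2 * (\<Sum>l. W \<psi>u 0 (Suc m + l) \<omega>))
        = W \<psi>u 0 m \<omega> * W \<psi>u 0 m \<omega> + 2 * (W \<psi>u 0 m \<omega> * (\<Sum>l. W \<psi>u 0 (Suc m + l) \<omega>))"
      by (simp only: distrib_left mult.left_commute)
    show "W \<psi>u 0 m \<omega> * (W \<psi>u 0 m \<omega> + 2 * (\<Sum>l. W \<psi>u 0 (Suc m + l) \<omega>)) = A2 m \<omega> + 2 * B m \<omega>"
      unfolding 4 1 3 ..
  qed
  finally show ?thesis .
qed

lemma int_A2: "(\<integral>\<^sup>+\<omega>. A2 m \<omega> \<partial>M j) = (\<Sum>i\<in>E. Q i (\<lambda>r k. \<psi>2 k) * e m i)"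
proof -
  have "(\<integral>\<^sup>+\<omega>. A2 m \<omega> \<partial>M j) = (\<integral>\<^sup>+\<omega>. I m \<omega> * (\<lambda>r k. \<psi>2 k) (J (Suc m) \<omega>) (incr S m \<omega>) \<partial>M j)"
    by (simp add: A2_def)
  also have "\<dots> = (\<integral>\<^sup>+\<omega>. I m \<omega> * Q (J m \<omega>) (\<lambda>r k. \<psi>2 k) \<partial>M j)"
    by (rule P1[OF jE histfun_I])
  also have "\<dots> = (\<integral>\<^sup>+\<omega>. (if fut 0 m \<omega> then Q (J m \<omega>) (\<lambda>r k. \<psi>2 k) else 0) \<partial>M j)"
    by (intro nn_integral_cong) (simp add: I_def)
  also have "\<dots> = (\<Sum>i\<in>E. Q i (\<lambda>r k. \<psi>2 k) * e m i)"
    unfolding e_def by (rule split_J[OF jE]) (use jE in measurable)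
  finally show ?thesis .
qed

lemma int_B: "(\<integral>\<^sup>+\<omega>. B m \<omega> \<partial>M j) = (\<Sum>i\<in>E. Q i g1 * e m i)"
proof -
  have "(\<integral>\<^sup>+\<omega>. B m \<omega> \<partial>M j) = (\<integral>\<^sup>+\<omega>. (\<Sum>l. Fm m \<omega> * W \<psi>u (Suc m) l \<omega>) \<partial>M j)"
    by (simp add: B_def)
  also have "\<dots> = (\<Sum>l. \<integral>\<^sup>+\<omega>. Fm m \<omega> * W \<psi>u (Suc m) l \<omega> \<partial>M j)"
    by (rule nn_integral_suminf) (use jE in measurable)
  also have "\<dots> = (\<Sum>l. \<integral>\<^sup>+\<omega>. Fm m \<omega> * wfun \<psi>u l (J (Suc m) \<omega>) \<partial>M j)"
  proof (rule suminf_cong)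
    fix l show "(\<integral>\<^sup>+\<omega>. Fm m \<omega> * W \<psi>u (Suc m) l \<omega> \<partial>M j) = (\<integral>\<^sup>+\<omega>. Fm m \<omega> * wfun \<psi>u l (J (Suc m) \<omega>) \<partial>M j)"
      by (rule MK[OF jE histfun_Fm])
  qed
  also have "\<dots> = (\<integral>\<^sup>+\<omega>. (\<Sum>l. Fm m \<omega> * wfun \<psi>u l (J (Suc m) \<omega>)) \<partial>M j)"
    by (rule nn_integral_suminf[symmetric]) (use jE in measurable)
  also have "\<dots> = (\<integral>\<^sup>+\<omega>. I m \<omega> * g1 (J (Suc m) \<omega>) (incr S m \<omega>) \<partial>M j)"
    by (intro nn_integral_cong) (simp add: Fm_def g1_def mu'_def mult_ac)
  also have "\<dots> = (\<integral>\<^sup>+\<omega>. I m \<omega> * Q (J m \<omega>) g1 \<partial>M j)"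
    by (rule P1[OF jE histfun_I])
  also have "\<dots> = (\<integral>\<^sup>+\<omega>. (if fut 0 m \<omega> then Q (J m \<omega>) g1 else 0) \<partial>M j)"
    by (intro nn_integral_cong) (simp add: I_def)
  also have "\<dots> = (\<Sum>i\<in>E. Q i g1 * e m i)"
    unfolding e_def by (rule split_J[OF jE]) (use jE in measurable)
  finally show ?thesis .
qed

lemma MAIN1:
  assumes ret: "AE \<omega> in M j. \<exists>l\<ge>1. J l \<omega> = j"
  shows "(\<integral>\<^sup>+\<omega>. (Tp \<omega>)^2 \<partial>M j) = (\<Sum>i\<in>E. G i * (Q i (\<lambda>r k. \<psi>2 k) + 2 * Q i g1))"
proof -
  have "(\<integral>\<^sup>+\<omega>. (Tp \<omega>)^2 \<partial>M j) = (\<integral>\<^sup>+\<omega>. (\<Sum>m. A2 m \<omega> + 2 * B m \<omega>) \<partial>M j)"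
    by (rule nn_integral_cong_AE) (use ret sq_pointwise in auto)
  also have "\<dots> = (\<Sum>m. \<integral>\<^sup>+\<omega>. A2 m \<omega> + 2 * B m \<omega> \<partial>M j)"
    by (rule nn_integral_suminf) (use jE in measurable)
  also have "\<dots> = (\<Sum>m. (\<integral>\<^sup>+\<omega>. A2 m \<omega> \<partial>M j) + 2 * (\<integral>\<^sup>+\<omega>. B m \<omega> \<partial>M j))"
    using jE by (intro suminf_cong) (simp add: nn_integral_add nn_integral_cmult)
  also have "\<dots> = (\<Sum>m. \<Sum>i\<in>E. (Q i (\<lambda>r k. \<psi>2 k) + 2 * Q i g1) * e m i)"
    by (intro suminf_cong) (simp add: int_A2 int_B sum_distrib_left sum.distrib[symmetric] algebra_simps)
  also have "\<dots> = (\<Sum>i\<in>E. \<Sum>m. (Q i (\<lambda>r k. \<psi>2 k) + 2 * Q i g1) * e m i)"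
    by (rule suminf_sum) simp
  also have "\<dots> = (\<Sum>i\<in>E. G i * (Q i (\<lambda>r k. \<psi>2 k) + 2 * Q i g1))"
    by (simp add: G_def mult.commute)
  finally show ?thesis .
qed

end


context mrcj
begin

lemma e0: "e 0 r = (if r = j then 1 else 0)"
proof -
  interpret prob_space "M j" using jE by simp
  show ?thesis
  proof (cases "r = j")
    case True
    then have "{\<omega>\<in>space (M j). fut 0 0 \<omega> \<and> J 0 \<omega> = r} = space (M j)" using J0[OF jE] by auto
    then show ?thesis using True unfolding e_def by (simp add: emeasure_space_1)
  next
    case False
    then have "{\<omega>\<in>space (M j). fut 0 0 \<omega> \<and> J 0 \<omega> = r} = {}" using J0[OF jE] by auto
    then show ?thesis using False unfolding e_def by (metis emeasure_empty)
  qed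
qed

lemma eSuc_j: "e (Suc m) j = 0"
proof -
  have "{\<omega>\<in>space (M j). fut 0 (Suc m) \<omega> \<and> J (Suc m) \<omega> = j} = {}" by (auto simp: fut_def)
  then show ?thesis unfolding e_def by (metis emeasure_empty)
qed

lemma fut_Suc_right: "fut 0 (Suc m) \<omega> \<longleftrightarrow> fut 0 m \<omega> \<and> J (Suc m) \<omega> \<noteq> j"
  using fut_add[of 0 m 1 \<omega>] by (simp add: fut_Suc)

lemma step_meas:
  assumes i: "i \<in> E"
  shows "emeasure (M j) {\<omega>\<in>space (M j). fut 0 m \<omega> \<and> J (Suc m) \<omega> = i} = (\<Sum>r\<in>E. ennreal (pker q r i) * e m r)"
proof -
  have "emeasure (M j) {\<omega>\<in>space (M j). fut 0 m \<omega> \<and> J (Suc m) \<omega> = i}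
      = (\<integral>\<^sup>+\<omega>. indicator {\<omega>\<in>space (M j). fut 0 m \<omega> \<and> J (Suc m) \<omega> = i} \<omega> \<partial>M j)"
    by (rule nn_integral_indicator[symmetric]) (use jE in measurable)
  also have "\<dots> = (\<integral>\<^sup>+\<omega>. I m \<omega> * (\<lambda>r k. if r = i then 1 else 0) (J (Suc m) \<omega>) (incr S m \<omega>) \<partial>M j)"
    by (intro nn_integral_cong) (auto simp: I_def split: split_indicator)
  also have "\<dots> = (\<integral>\<^sup>+\<omega>. I m \<omega> * Q (J m \<omega>) (\<lambda>r k. if r = i then 1 else 0) \<partial>M j)"
    by (rule P1[OF jE histfun_I])
  also have "\<dots> = (\<integral>\<^sup>+\<omega>. (if fut 0 m \<omega> then ennreal (pker q (J m \<omega>) i) else 0) \<partial>M j)"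
    by (intro nn_integral_cong) (simp add: I_def Q_indicator[OF JE[OF jE] i])
  also have "\<dots> = (\<Sum>r\<in>E. ennreal (pker q r i) * e m r)"
    unfolding e_def by (rule split_J[OF jE]) (use jE in measurable)
  finally show ?thesis .
qed

lemma eSuc: assumes i: "i \<in> E" and ij: "i \<noteq> j"
  shows "e (Suc m) i = (\<Sum>r\<in>E. ennreal (pker q r i) * e m r)"
proof -
  have "{\<omega>\<in>space (M j). fut 0 (Suc m) \<omega> \<and> J (Suc m) \<omega> = i} = {\<omega>\<in>space (M j). fut 0 m \<omega> \<and> J (Suc m) \<omega> = i}"
    using ij by (auto simp: fut_Suc_right)
  then show ?thesis using step_meas[OF i, of m] unfolding e_def by simp
qed

lemma ret_union: "(\<Sum>m. emeasure (M j) {\<omega>\<in>space (M j). fut 0 m \<omega> \<and> J (Suc m) \<omega> = j})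
    = emeasure (M j) {\<omega>\<in>space (M j). \<exists>l\<ge>1. J l \<omega> = j}"
proof -
  let ?A = "\<lambda>m. {\<omega>\<in>space (M j). fut 0 m \<omega> \<and> J (Suc m) \<omega> = j}"
  have "(\<Sum>m. emeasure (M j) (?A m)) = emeasure (M j) (\<Union>(range ?A))"
  proof (rule suminf_emeasure)
    show "range ?A \<subseteq> sets (M j)" using jE by auto
    show "disjoint_family ?A"
      unfolding disjoint_family_on_def
    proof (intro ballI impI)
      fix m m' :: nat assume "m \<noteq> m'"
      then consider "m < m'" | "m' < m" by linarith
      then show "?A m \<inter> ?A m' = {}"
        by cases (auto simp: fut_def)
    qed
  qed
  also have "\<Union>(range ?A) = {\<omega>\<in>space (M j). \<exists>l\<ge>1. J l \<omega> = j}"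
  proof
    show "\<Union>(range ?A) \<subseteq> {\<omega>\<in>space (M j). \<exists>l\<ge>1. J l \<omega> = j}" by auto
    show "{\<omega>\<in>space (M j). \<exists>l\<ge>1. J l \<omega> = j} \<subseteq> \<Union>(range ?A)"
    proof
      fix \<omega> assume w: "\<omega> \<in> {\<omega>\<in>space (M j). \<exists>l\<ge>1. J l \<omega> = j}"
      then have ex: "\<exists>l\<ge>1. J l \<omega> = j" by auto
      have t: "tau \<omega> \<ge> 1 \<and> J (tau \<omega>) \<omega> = j"
        unfolding tau_def using ex by (rule LeastI_ex)
      then have "\<omega> \<in> ?A (tau \<omega> - 1)" using w fut0_iff[OF ex, of "tau \<omega> - 1"] by auto
      then show "\<omega> \<in> \<Union>(range ?A)" by blast
    qed
  qed
  finally show ?thesis .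
qed

lemma G_inv:
  assumes ret: "AE \<omega> in M j. \<exists>l\<ge>1. J l \<omega> = j"
  shows "G j = 1" "\<And>i. i \<in> E \<Longrightarrow> G i = (\<Sum>r\<in>E. G r * ennreal (pker q r i))"
proof -
  interpret prob_space "M j" using jE by simp
  show Gj: "G j = 1" unfolding G_def
    by (subst suminf_ennreal_head) (simp add: e0 eSuc_j)
  fix i assume i: "i \<in> E"
  have sw: "(\<Sum>r\<in>E. G r * ennreal (pker q r i)) = (\<Sum>m. \<Sum>r\<in>E. ennreal (pker q r i) * e m r)"
    unfolding G_def by (subst suminf_sum) (simp_all add: mult.commute)
  show "G i = (\<Sum>r\<in>E. G r * ennreal (pker q r i))"
  proof (cases "i = j")
    case True
    have "(\<Sum>m. \<Sum>r\<in>E. ennreal (pker q r i) * e m r) = emeasure (M j) {\<omega>\<in>space (M j). \<exists>l\<ge>1. J l \<omega> = j}"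
      unfolding True step_meas[OF jE, symmetric] by (rule ret_union)
    also have "\<dots> = 1"
      by (rule emeasure_eq_1_AE) (use jE ret in auto)
    finally show ?thesis unfolding sw using Gj True by simp
  next
    case False
    have "G i = e 0 i + (\<Sum>m. e (Suc m) i)" unfolding G_def by (rule suminf_ennreal_head)
    also have "\<dots> = (\<Sum>m. \<Sum>r\<in>E. ennreal (pker q r i) * e m r)"
      using False by (simp add: e0 eSuc[OF i False])
    finally show ?thesis unfolding sw .
  qed
qed

end


context mrc
begin

definition invv :: "(nat \<Rightarrow> ennreal) \<Rightarrow> bool" where
  "invv v \<longleftrightarrow> (\<forall>i\<in>E. v i = (\<Sum>r\<in>E. v r * ennreal (pker q r i)))"

lemma ennreal_sum_pker:
  assumes "\<And>r. r \<in> E \<Longrightarrow> a r \<ge> 0"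
  shows "ennreal (\<Sum>r\<in>E. a r * pker q r i) = (\<Sum>r\<in>E. ennreal (a r) * ennreal (pker q r i))"
proof -
  have "(\<Sum>r\<in>E. ennreal (a r) * ennreal (pker q r i)) = (\<Sum>r\<in>E. ennreal (a r * pker q r i))"
    by (intro sum.cong refl) (simp add: ennreal_mult pker_nonneg assms)
  also have "\<dots> = ennreal (\<Sum>r\<in>E. a r * pker q r i)"
    by (rule sum_ennreal) (simp add: assms pker_nonneg)
  finally show ?thesis ..
qed

lemma pkpow_nonneg: "pkpow s q n a b \<ge> 0"
  by (induction n arbitrary: b) (auto intro!: sum_nonneg mult_nonneg_nonneg pker_nonneg)

lemma inv_pow:
  assumes inv: "invv v" and i: "i \<in> E"
  shows "v i = (\<Sum>r\<in>E. v r * ennreal (pkpow s q n r i))"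
  using i
proof (induction n arbitrary: i)
  case 0
  then show ?case by (simp add: if_distrib sum.delta cong: if_cong)
next
  case (Suc n)
  have "v i = (\<Sum>r'\<in>E. v r' * ennreal (pker q r' i))" using inv Suc.prems unfolding invv_def by blast
  also have "\<dots> = (\<Sum>r'\<in>E. (\<Sum>r\<in>E. v r * ennreal (pkpow s q n r r')) * ennreal (pker q r' i))"
  proof (rule sum.cong[OF refl])
    fix r' assume r': "r' \<in> E"
    show "v r' * ennreal (pker q r' i) = (\<Sum>r\<in>E. v r * ennreal (pkpow s q n r r')) * ennreal (pker q r' i)"
      by (rule arg_cong[where f="\<lambda>x. x * ennreal (pker q r' i)", OF Suc.IH[OF r']])
  qed
  also have "\<dots> = (\<Sum>r\<in>E. v r * (\<Sum>r'\<in>E. ennreal (pkpow s q n r r') * ennreal (pker q r' i)))"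
    unfolding sum_distrib_right sum_distrib_left by (subst sum.swap) (simp only: mult.assoc)
  also have "\<dots> = (\<Sum>r\<in>E. v r * ennreal (pkpow s q (Suc n) r i))"
    by (intro sum.cong refl arg_cong[where f="\<lambda>x. v _ * x"])
       (simp add: ennreal_mult'' pkpow_nonneg pker_nonneg sum_ennreal[symmetric] mult_nonneg_nonneg del: sum_ennreal)
  finally show ?case .
qed

lemma inv_bound:
  assumes inv: "invv v" and k: "k \<in> E" and i: "i \<in> E"
  shows "v i * ennreal (pkpow s q n i k) \<le> v k"
proof -
  have "v i * ennreal (pkpow s q n i k) \<le> (\<Sum>r\<in>E. v r * ennreal (pkpow s q n r k))"
    by (rule member_le_sum[OF i]) auto
  also have "\<dots> = v k" by (rule inv_pow[OF inv k, symmetric])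
  finally show ?thesis .
qed

lemma inv_zero:
  assumes irr: "irreducible_J s q" and inv: "invv v" and k: "k \<in> E" "v k = 0" and i: "i \<in> E"
  shows "v i = 0"
proof -
  obtain n where n: "pkpow s q n i k > 0" using irr i k unfolding irreducible_J_def by blast
  have "v i * ennreal (pkpow s q n i k) \<le> 0" using inv_bound[OF inv k(1) i, of n] k(2) by simp
  then show ?thesis using n by simp
qed

lemma inv_finite:
  assumes irr: "irreducible_J s q" and inv: "invv v" and k: "k \<in> E" "v k < \<infinity>" and i: "i \<in> E"
  shows "v i < \<infinity>"
proof (rule ccontr)
  assume "\<not> v i < \<infinity>"
  then have vi: "v i = \<infinity>" by (simp add: less_top[symmetric])
  obtain n where n: "pkpow s q n i k > 0" using irr i k unfolding irreducible_J_def by blast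
  have "v i * ennreal (pkpow s q n i k) \<le> v k" by (rule inv_bound[OF inv k(1) i])
  then show False using vi n k(2) by (simp add: ennreal_mult_top)
qed

lemma cycle_unique:
  assumes irr: "irreducible_J s q" and st: "stationary s q \<nu>" and jE: "j \<in> E"
    and inv: "invv G" and Gj: "G j = 1"
  shows "\<forall>i\<in>E. \<nu> i > 0" "\<forall>i\<in>E. G i = ennreal (\<nu> i / \<nu> j)"
proof -
  have nn: "\<forall>i\<in>E. \<nu> i \<ge> 0" and s1: "(\<Sum>i\<in>E. \<nu> i) = 1"
    and nst: "\<forall>i\<in>E. \<nu> i = (\<Sum>r\<in>E. \<nu> r * pker q r i)"
    using st unfolding stationary_def by auto
  have invnu: "invv (\<lambda>i. ennreal (\<nu> i))"
    unfolding invv_def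
  proof
    fix i assume i: "i \<in> E"
    have "ennreal (\<nu> i) = ennreal (\<Sum>r\<in>E. \<nu> r * pker q r i)" using nst[rule_format, OF i] by (rule arg_cong)
    also have "\<dots> = (\<Sum>r\<in>E. ennreal (\<nu> r) * ennreal (pker q r i))"
      using nn by (intro ennreal_sum_pker) auto
    finally show "ennreal (\<nu> i) = (\<Sum>r\<in>E. ennreal (\<nu> r) * ennreal (pker q r i))" .
  qed
  show pos: "\<forall>i\<in>E. \<nu> i > 0"
  proof (rule ccontr)
    assume "\<not> (\<forall>i\<in>E. \<nu> i > 0)"
    then obtain k where k: "k \<in> E" "\<nu> k \<le> 0" by force
    then have "\<nu> k = 0" using nn by force
    then have "\<forall>i\<in>E. ennreal (\<nu> i) = 0" using inv_zero[OF irr invnu k(1)] by simp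
    then have "\<forall>i\<in>E. \<nu> i = 0" using nn by auto
    then show False using s1 by simp
  qed
  have fin: "\<forall>i\<in>E. G i < \<infinity>" using inv_finite[OF irr inv jE] Gj by simp
  define g where "g i = enn2real (G i)" for i
  have Gg: "\<forall>i\<in>E. G i = ennreal (g i)" using fin by (simp add: g_def)
  have gnn: "g i \<ge> 0" for i by (simp add: g_def)
  have ginv: "\<forall>i\<in>E. g i = (\<Sum>r\<in>E. g r * pker q r i)"
  proof
    fix i assume i: "i \<in> E"
    have "G i = (\<Sum>r\<in>E. G r * ennreal (pker q r i))" using inv i unfolding invv_def by blast
    also have "\<dots> = (\<Sum>r\<in>E. ennreal (g r) * ennreal (pker q r i))"
      using Gg by (intro sum.cong refl) simp
    finally have "ennreal (g i) = (\<Sum>r\<in>E. ennreal (g r) * ennreal (pker q r i))" using Gg i by simp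
    also have "\<dots> = ennreal (\<Sum>r\<in>E. g r * pker q r i)"
      by (rule ennreal_sum_pker[symmetric]) (rule gnn)
    finally show "g i = (\<Sum>r\<in>E. g r * pker q r i)"
      by (subst (asm) ennreal_inj) (auto intro!: sum_nonneg mult_nonneg_nonneg pker_nonneg gnn)
  qed
  have Ene: "E \<noteq> {}" using jE by auto
  define lam where "lam = Min ((\<lambda>i. g i / \<nu> i) ` E)"
  have "lam \<in> (\<lambda>i. g i / \<nu> i) ` E" unfolding lam_def by (rule Min_in) (use Ene in auto)
  then obtain k where k: "k \<in> E" "lam = g k / \<nu> k" by blast
  have lam_le: "lam \<le> g i / \<nu> i" if "i \<in> E" for i
    unfolding lam_def using that by (intro Min_le) auto
  define h where "h i = g i - lam * \<nu> i" for i
  have hnn: "h i \<ge> 0" if "i \<in> E" for i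
  proof -
    have "\<nu> i > 0" using pos that by blast
    then have "lam * \<nu> i \<le> g i" using lam_le[OF that] by (simp add: le_divide_eq)
    then show ?thesis by (simp add: h_def)
  qed
  have "\<nu> k > 0" using pos k by blast
  then have hk: "h k = 0" using k by (simp add: h_def)
  have hinv: "invv (\<lambda>i. ennreal (h i))"
    unfolding invv_def
  proof
    fix i assume i: "i \<in> E"
    have "(\<Sum>r\<in>E. h r * pker q r i) = (\<Sum>r\<in>E. g r * pker q r i) - lam * (\<Sum>r\<in>E. \<nu> r * pker q r i)"
      unfolding h_def left_diff_distrib sum_subtractf sum_distrib_left by (simp add: mult.assoc)
    also have "\<dots> = h i" unfolding h_def by (simp only: ginv[rule_format, OF i, symmetric] nst[rule_format, OF i, symmetric])
    finally have "h i = (\<Sum>r\<in>E. h r * pker q r i)" ..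
    then have "ennreal (h i) = ennreal (\<Sum>r\<in>E. h r * pker q r i)" by simp
    also have "\<dots> = (\<Sum>r\<in>E. ennreal (h r) * ennreal (pker q r i))"
      using hnn by (intro ennreal_sum_pker) auto
    finally show "ennreal (h i) = (\<Sum>r\<in>E. ennreal (h r) * ennreal (pker q r i))" .
  qed
  have h0: "h i = 0" if "i \<in> E" for i
    using inv_zero[OF irr hinv k(1) _ that] hk hnn[OF that] by simp
  have "g j = 1" by (simp add: g_def Gj)
  have nj: "\<nu> j > 0" using pos jE by blast
  have "lam * \<nu> j = 1" using h0[OF jE] \<open>g j = 1\<close> unfolding h_def by simp
  then have lamj: "lam = 1 / \<nu> j" using nj by (simp add: eq_divide_eq)
  show "\<forall>i\<in>E. G i = ennreal (\<nu> i / \<nu> j)"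
  proof
    fix i assume i: "i \<in> E"
    have "g i = lam * \<nu> i" using h0[OF i] unfolding h_def by simp
    then have "g i = \<nu> i / \<nu> j" unfolding lamj by simp
    then show "G i = ennreal (\<nu> i / \<nu> j)" using Gg i by simp
  qed
qed

end


context mrcj
begin

lemma never_null:
  assumes ret: "AE \<omega> in M j. \<exists>l\<ge>1. J l \<omega> = j"
    and i: "i \<in> E" and r: "r \<in> E" "r \<noteq> j" and ppos: "pker q i r > 0" and Gi: "G i > 0"
  shows "emeasure (M r) {\<omega>\<in>space (M r). \<not> (\<exists>l\<ge>1. J l \<omega> = j)} = 0"
proof -
  interpret Pj: prob_space "M j" using jE by simp
  interpret Pr: prob_space "M r" using r by simp
  obtain m where em: "e m i \<noteq> 0"
  proof (rule ccontr)
    assume "\<not> thesis"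
    then have "\<forall>m. e m i = 0" using that by blast
    then have "G i = 0" by (simp add: G_def)
    then show False using Gi by simp
  qed
  define f where "f \<omega> = (if fut 0 m \<omega> \<and> J m \<omega> = i \<and> J (Suc m) \<omega> = r then 1 else 0 :: ennreal)" for \<omega>
  define I' where "I' \<omega> = (if fut 0 m \<omega> \<and> J m \<omega> = i then 1 else 0 :: ennreal)" for \<omega>
  define \<psi>1 where "\<psi>1 = (\<lambda>_::nat^'d. 1::ennreal)"
  define c where "c = ennreal (pker q i r) * e m i"
  have hf: "histfun (Suc m) f" unfolding f_def by (rule histfunI) (auto simp: fut_def)
  have hI': "histfun m I'" unfolding I'_def by (rule histfunI) (auto simp: fut_def)
  have [measurable]: "f \<in> borel_measurable (M j)" using hf jE by (rule histfun_meas)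
  have [measurable]: "I' \<in> borel_measurable (M j)" using hI' jE by (rule histfun_meas)
  have cne: "c \<noteq> 0" using ppos em by (simp add: c_def)
  have intf: "(\<integral>\<^sup>+\<omega>. f \<omega> \<partial>M j) = c"
  proof -
    have "(\<integral>\<^sup>+\<omega>. f \<omega> \<partial>M j) = (\<integral>\<^sup>+\<omega>. I' \<omega> * (\<lambda>r' k. if r' = r then 1 else 0) (J (Suc m) \<omega>) (incr S m \<omega>) \<partial>M j)"
      by (intro nn_integral_cong) (simp add: f_def I'_def)
    also have "\<dots> = (\<integral>\<^sup>+\<omega>. I' \<omega> * Q (J m \<omega>) (\<lambda>r' k. if r' = r then 1 else 0) \<partial>M j)"
      by (rule P1[OF jE hI'])
    also have "\<dots> = (\<integral>\<^sup>+\<omega>. ennreal (pker q i r) * indicator {\<omega>\<in>space (M j). fut 0 m \<omega> \<and> J m \<omega> = i} \<omega> \<partial>M j)"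
      by (intro nn_integral_cong) (auto simp: I'_def Q_indicator[OF i r(1)] split: split_indicator)
    also have "\<dots> = c" unfolding c_def e_def by (rule nn_integral_cmult_indicator) (use jE in measurable)
    finally show ?thesis .
  qed
  define x where "x = emeasure (M r) {\<omega>\<in>space (M r). \<not> (\<exists>l\<ge>1. J l \<omega> = j)}"
  have bound: "x * c \<le> emeasure (M j) {\<omega>\<in>space (M j). fut 0 (Suc m + l) \<omega>}" for l
  proof -
    have "x \<le> wfun \<psi>1 l r"
    proof -
      have "x = (\<integral>\<^sup>+\<omega>. indicator {\<omega>\<in>space (M r). \<not> (\<exists>l\<ge>1. J l \<omega> = j)} \<omega> \<partial>M r)"
        unfolding x_def by (rule nn_integral_indicator[symmetric]) (use r in measurable)
      also have "\<dots> \<le> (\<integral>\<^sup>+\<omega>. W \<psi>1 0 l \<omega> \<partial>M r)"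
        by (intro nn_integral_mono) (auto simp: W_def \<psi>1_def fut_def split: split_indicator)
      also have "\<dots> = wfun \<psi>1 l r" by (rule wfun_eq[OF r(1), symmetric])
      finally show ?thesis .
    qed
    then have "x * c \<le> wfun \<psi>1 l r * c" by (rule mult_right_mono) simp
    also have "\<dots> = (\<integral>\<^sup>+\<omega>. f \<omega> \<partial>M j) * wfun \<psi>1 l r"
      unfolding intf by (rule mult.commute)
    also have "\<dots> = (\<integral>\<^sup>+\<omega>. f \<omega> * wfun \<psi>1 l r \<partial>M j)"
      by (rule nn_integral_multc[symmetric]) simp
    also have "\<dots> = (\<integral>\<^sup>+\<omega>. f \<omega> * wfun \<psi>1 l (J (Suc m) \<omega>) \<partial>M j)"
      by (intro nn_integral_cong) (simp add: f_def)
    also have "\<dots> = (\<integral>\<^sup>+\<omega>. f \<omega> * W \<psi>1 (Suc m) l \<omega> \<partial>M j)"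
      by (rule MK[OF jE hf, symmetric])
    also have "\<dots> \<le> (\<integral>\<^sup>+\<omega>. indicator {\<omega>\<in>space (M j). fut 0 (Suc m + l) \<omega>} \<omega> \<partial>M j)"
    proof (intro nn_integral_mono)
      fix \<omega> assume w: "\<omega> \<in> space (M j)"
      have fa: "fut 0 (Suc m + l) \<omega> \<longleftrightarrow> fut 0 m \<omega> \<and> J (Suc m) \<omega> \<noteq> j \<and> fut (Suc m) l \<omega>"
        using fut_add[of 0 m "Suc l" \<omega>] by (simp add: fut_Suc)
      show "f \<omega> * W \<psi>1 (Suc m) l \<omega> \<le> indicator {\<omega>\<in>space (M j). fut 0 (Suc m + l) \<omega>} \<omega>"
        using w r(2) fa by (auto simp: f_def W_def \<psi>1_def split: split_indicator)
    qed
    also have "\<dots> = emeasure (M j) {\<omega>\<in>space (M j). fut 0 (Suc m + l) \<omega>}"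
      by (rule nn_integral_indicator) (use jE in measurable)
    finally show ?thesis .
  qed
  define A where "A n = {\<omega>\<in>space (M j). fut 0 n \<omega>}" for n
  have lim: "(\<lambda>n. emeasure (M j) (A n)) \<longlonglongrightarrow> emeasure (M j) (\<Inter>(range A))"
  proof (rule Lim_emeasure_decseq)
    show "range A \<subseteq> sets (M j)" unfolding A_def using jE by auto
    show "antimono_on UNIV A" unfolding A_def by (auto simp: monotone_on_def fut_def)
    show "\<And>i. emeasure (M j) (A i) \<noteq> \<infinity>" by simp
  qed
  have "x * c \<le> emeasure (M j) (\<Inter>(range A))"
  proof (rule LIMSEQ_le_const[OF lim])
    show "\<exists>N. \<forall>n\<ge>N. x * c \<le> emeasure (M j) (A n)"
    proof (intro exI allI impI)
      fix n assume "Suc m \<le> n"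
      then obtain l where "n = Suc m + l" using le_Suc_ex by blast
      then show "x * c \<le> emeasure (M j) (A n)" using bound[of l] by (simp add: A_def)
    qed
  qed
  also have "\<dots> \<le> emeasure (M j) {\<omega>\<in>space (M j). \<not> (\<exists>l\<ge>1. J l \<omega> = j)}"
  proof (rule emeasure_mono)
    show "\<Inter>(range A) \<subseteq> {\<omega>\<in>space (M j). \<not> (\<exists>l\<ge>1. J l \<omega> = j)}"
    proof
      fix \<omega> assume "\<omega> \<in> \<Inter>(range A)"
      then have w: "\<omega> \<in> space (M j)" and all: "\<And>n. fut 0 n \<omega>" by (auto simp: A_def)
      have "\<not> (J l \<omega> = j)" if "l \<ge> 1" for l
        using all[of l] that unfolding fut_def by auto
      then show "\<omega> \<in> {\<omega>\<in>space (M j). \<not> (\<exists>l\<ge>1. J l \<omega> = j)}" using w by auto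
    qed
    show "{\<omega>\<in>space (M j). \<not> (\<exists>l\<ge>1. J l \<omega> = j)} \<in> sets (M j)" using jE by measurable
  qed
  also have "\<dots> = 0"
    using ret by (subst (asm) AE_iff_measurable[OF _ refl]) (use jE in measurable)
  finally have "x * c = 0" by simp
  then show ?thesis using cne unfolding x_def by simp
qed

lemma mu1_eq:
  assumes r: "r \<in> E" and nul: "emeasure (M r) {\<omega>\<in>space (M r). \<not> (\<exists>l\<ge>1. J l \<omega> = j)} = 0"
  shows "mu1 M J S u r j = mu' r"
proof -
  have ae: "AE \<omega> in M r. \<exists>l\<ge>1. J l \<omega> = j"
    by (subst AE_iff_measurable[OF _ refl]) (use r nul in measurable)
  have "mu1 M J S u r j = (\<integral>\<^sup>+\<omega>. Tp \<omega> \<partial>M r)"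
    unfolding mu1_def by (rule nn_integral_cong_AE) (use ae Tret_Tp[OF r] in auto)
  also have "\<dots> = (\<Sum>l. \<integral>\<^sup>+\<omega>. W \<psi>u 0 l \<omega> \<partial>M r)"
    unfolding Tp_def by (rule nn_integral_suminf) (use r in measurable)
  also have "\<dots> = mu' r" unfolding mu'_def using wfun_eq[OF r] by simp
  finally show ?thesis .
qed

definition N :: "nat \<Rightarrow> nat \<Rightarrow> ennreal" where
  "N i r = (\<integral>\<^sup>+k. ennreal (q i r k) * \<psi>u k \<partial>count_space UNIV)"

lemma Q_m2: assumes i: "i \<in> E" shows "Q i (\<lambda>r k. \<psi>2 k) = m2 s q u i"
  unfolding Q_split[OF i] m2_def
  by (intro sum.cong refl) (simp add: infsum_count_space \<psi>2_def mult.commute)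

lemma Q_g1: assumes i: "i \<in> E" shows "Q i g1 = (\<Sum>r\<in>E - {j}. N i r * mu' r)"
proof -
  have "Q i g1 = (\<Sum>r\<in>E. if r \<noteq> j then N i r * mu' r else 0)"
    unfolding Q_split[OF i]
  proof (intro sum.cong refl)
    fix r
    show "(\<integral>\<^sup>+k. ennreal (q i r k) * g1 r k \<partial>count_space UNIV) = (if r \<noteq> j then N i r * mu' r else 0)"
      unfolding N_def g1_def
      by (cases "r = j") (simp_all add: mult.assoc[symmetric] nn_integral_multc)
  qed
  also have "\<dots> = (\<Sum>r\<in>E - {j}. N i r * mu' r)"
  proof -
    have "E \<inter> {r. r \<noteq> j} = E - {j}" by auto
    then show ?thesis by (simp add: sum.If_cases)
  qed
  finally show ?thesis .
qed

lemma N_m1: assumes i: "i \<in> E" shows "N i r = ennreal (pker q i r) * m1 q u i r"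
proof -
  have m1: "m1 q u i r = N i r / ennreal (pker q i r)"
    unfolding m1_def N_def by (simp add: infsum_count_space \<psi>u_def mult.commute)
  show ?thesis
  proof (cases "pker q i r = 0")
    case True
    have "ennreal (q i r k) = 0" for k
    proof -
      have "ennreal (q i r k) \<le> (\<integral>\<^sup>+k. ennreal (q i r k) \<partial>count_space UNIV)"
        by (rule nn_integral_ge_point) simp
      also have "\<dots> = 0" using pker_ennreal[OF i, of r] True by simp
      finally show ?thesis by simp
    qed
    then have "N i r = 0" unfolding N_def by simp
    then show ?thesis using True by simp
  next
    case False
    then have p: "pker q i r > 0" using pker_nonneg[of i r] by simp
    show ?thesis unfolding m1 ennreal_times_divide using p
      by (simp add: mult.commute[of "ennreal _"] mult_divide_eq_ennreal)
  qed
qed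

end


lemma final_alg_gen:
  fixes a A :: "nat \<Rightarrow> 'a::comm_semiring_1" and p m :: "nat \<Rightarrow> nat \<Rightarrow> 'a" and w :: "nat \<Rightarrow> 'a"
  shows "(\<Sum>i\<in>I. a i * ic * (A i + 2 * (\<Sum>r\<in>R. p i r * m i r * w r)))
       = (\<Sum>i\<in>I. a i * A i) * ic + 2 * (\<Sum>i\<in>I. \<Sum>r\<in>R. a i * p i r * m i r * w r) * ic"
  by (simp add: sum_distrib_left sum_distrib_right sum.distrib distrib_left mult_ac)

lemma final_alg:
  fixes a A :: "nat \<Rightarrow> ennreal" and p m :: "nat \<Rightarrow> nat \<Rightarrow> ennreal" and w :: "nat \<Rightarrow> ennreal"
  shows "(\<Sum>i\<in>I. a i / c * (A i + 2 * (\<Sum>r\<in>R. p i r * m i r * w r)))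
       = (\<Sum>i\<in>I. a i * A i) / c + 2 * (\<Sum>i\<in>I. \<Sum>r\<in>R. a i * p i r * m i r * w r) / c"
  unfolding divide_ennreal_def by (rule final_alg_gen)

theorem corollary5:
  fixes s :: nat
    and q :: "nat \<Rightarrow> nat \<Rightarrow> nat^'d \<Rightarrow> real"
    and M :: "nat \<Rightarrow> 'w measure"
    and J :: "nat \<Rightarrow> 'w \<Rightarrow> nat"
    and S :: "nat \<Rightarrow> 'w \<Rightarrow> nat^'d"
    and \<nu> :: "nat \<Rightarrow> real"
  assumes "s \<ge> 1"
    and "MTMRC s q M J S"
    and "irreducible_J s q"
    and "ergodic s M J S"
    and "stationary s q \<nu>"
    and "j \<in> stE s"
  shows "mu2 M J S u j j =
           (\<Sum>i\<in>stE s. ennreal (\<nu> i) * m2 s q u i) / ennreal (\<nu> j)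
         + 2 * (\<Sum>i\<in>stE s. \<Sum>r\<in>stE s - {j}.
                  ennreal (\<nu> i) * ennreal (pker q i r) * m1 q u i r * mu1 M J S u r j)
             / ennreal (\<nu> j)"
proof -
  interpret mrcj s q M J S j u
    by unfold_locales (use assms(2,6) in auto)
  have ret: "AE \<omega> in M j. \<exists>l\<ge>1. J l \<omega> = j"
  proof -
    have "AE \<omega> in M j. Tret J S u j \<omega> < \<infinity>" using assms(4,6) unfolding ergodic_def by blast
    then show ?thesis by eventually_elim (auto simp: Tret_def split: if_splits)
  qed
  have Gj: "G j = 1" by (rule G_inv(1)[OF ret])
  have inv: "invv G" unfolding invv_def using G_inv(2)[OF ret] by blast
  note cyc = cycle_unique[OF assms(3) assms(5) jE inv Gj]
  have pos: "\<And>i. i \<in> E \<Longrightarrow> \<nu> i > 0" using cyc(1) by blast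
  have Geq: "\<And>i. i \<in> E \<Longrightarrow> G i = ennreal (\<nu> i / \<nu> j)" using cyc(2) by blast
  have key: "N i r * mu' r = ennreal (pker q i r) * m1 q u i r * mu1 M J S u r j"
    if i: "i \<in> E" and r: "r \<in> E - {j}" for i r
  proof (cases "pker q i r = 0")
    case True
    then show ?thesis using N_m1[OF i, of r] by simp
  next
    case False
    then have p: "pker q i r > 0" using pker_nonneg[of i r] by simp
    have "G i > 0" using Geq[OF i] pos[OF i] pos[OF jE] by simp
    then have "emeasure (M r) {\<omega>\<in>space (M r). \<not> (\<exists>l\<ge>1. J l \<omega> = j)} = 0"
      using never_null[OF ret i _ _ p] r by blast
    then have "mu1 M J S u r j = mu' r" using mu1_eq r by blast
    then show ?thesis using N_m1[OF i, of r] by simp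
  qed
  have "mu2 M J S u j j = (\<integral>\<^sup>+\<omega>. (Tp \<omega>)^2 \<partial>M j)"
    unfolding mu2_def by (rule nn_integral_cong_AE) (use ret Tret_Tp[OF jE] in auto)
  also have "\<dots> = (\<Sum>i\<in>E. G i * (Q i (\<lambda>r k. \<psi>2 k) + 2 * Q i g1))"
    by (rule MAIN1[OF ret])
  also have "\<dots> = (\<Sum>i\<in>E. ennreal (\<nu> i) / ennreal (\<nu> j) * (m2 s q u i + 2 *
       (\<Sum>r\<in>E - {j}. ennreal (pker q i r) * m1 q u i r * mu1 M J S u r j)))"
  proof (rule sum.cong[OF refl])
    fix i assume i: "i \<in> E"
    have "G i = ennreal (\<nu> i) / ennreal (\<nu> j)"
      using Geq[OF i] pos[OF i] pos[OF jE] by (simp add: divide_ennreal)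
    moreover have "Q i g1 = (\<Sum>r\<in>E - {j}. ennreal (pker q i r) * m1 q u i r * mu1 M J S u r j)"
      unfolding Q_g1[OF i] using key[OF i] by (intro sum.cong refl) auto
    ultimately show "G i * (Q i (\<lambda>r k. \<psi>2 k) + 2 * Q i g1) = ennreal (\<nu> i) / ennreal (\<nu> j) * (m2 s q u i + 2 *
       (\<Sum>r\<in>E - {j}. ennreal (pker q i r) * m1 q u i r * mu1 M J S u r j))"
      using Q_m2[OF i] by simp
  qed
  also have "\<dots> = (\<Sum>i\<in>stE s. ennreal (\<nu> i) * m2 s q u i) / ennreal (\<nu> j)
         + 2 * (\<Sum>i\<in>stE s. \<Sum>r\<in>stE s - {j}.
                  ennreal (\<nu> i) * ennreal (pker q i r) * m1 q u i r * mu1 M J S u r j)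
             / ennreal (\<nu> j)"
    by (rule final_alg)
  finally show ?thesis .
qed


end
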